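(* Let $2\le n<d$ with $n=2$ or $n$ odd, and let $t$ be as defined below. Then there exists $E\in\mathrm{SL}(d,q)$ such that $T:=E^{-1}tE$ is a weak doubling element.
   Context: Vectors are row vectors and matrices act from the right; $\mathrm{Fix}(g)=\{x\in\mathbb{F}_q^d: xg=x\}$. $e_1,\dots,e_d$ is the standard basis of $V=\mathbb{F}_q^d$, $V_n=\langle e_1,\dots,e_n\rangle$, $F_{d-n}=\langle e_{n+1},\dots,e_d\rangle$, and $n'=\min\{2n-1,d\}$. An element $c\in\mathrm{GL}(d,q)$ is a weak doubling element if (C1) $\dim(V_n+V_nc)=n'$ and (C2) if $n'<d$ then $\dim(F_{d-n}+\mathrm{Fix}(c))=d$. $E_{i,j}(\lambda)$ is the identity matrix with $(i,j)$ entry replaced by $\lambda$ ($i\ne j$). Here $q=p^f$. The element $t$ is: $E_{1,2}(1)$ if $n=2$; $\operatorname{diag}(z_1,I_{d-n})$ if $n>2$ and $p=2$; $\operatorname{diag}(z_2,I_{d-n})$ if $n>2$ and $p$ odd, where ($P_\sigma$ being the $n\times n$ matrix with $e_iP_\sigma=e_{\sigma(i)}$) $z_1=P_{(1,n,n-1,\dots,2)}$ with $(1,n)$ entry changed to $-1$ if $n$ is even, and $z_2=P_{(2,n,n-1,\dots,3)}$ with $(2,n)$ entry changed to $-1$ if $n$ is odd. *)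

theory Defs
  imports "Jordan_Normal_Form.Gauss_Jordan_Elimination" "Jordan_Normal_Form.VS_Connect"
    "Jordan_Normal_Form.Determinant"
begin

(* Indices are 0-based: the paper's e_i is unit_vec d (i-1). *)

text \<open>Row vector times matrix: x g (matrices act from the right).\<close>
definition rmult :: "'a::field vec \<Rightarrow> 'a mat \<Rightarrow> 'a vec" where
  "rmult x g = transpose_mat g *\<^sub>v x"

definition span_d :: "nat \<Rightarrow> 'a::field vec set \<Rightarrow> 'a vec set" where
  "span_d d S = LinearCombinations.module.span class_ring (module_vec TYPE('a) d) S"

definition subdim :: "nat \<Rightarrow> 'a::field vec set \<Rightarrow> nat" where
  "subdim d W = vectorspace.dim class_ring ((module_vec TYPE('a) d)\<lparr>carrier := W\<rparr>)"

definition subsum :: "'a::field vec set \<Rightarrow> 'a vec set \<Rightarrow> 'a vec set" where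
  "subsum U W = {u + w | u w. u \<in> U \<and> w \<in> W}"

definition Vsub :: "nat \<Rightarrow> nat \<Rightarrow> 'a::field vec set" where
  "Vsub d n = span_d d (set (map (unit_vec d) [0..<n]))"

definition Fsub :: "nat \<Rightarrow> nat \<Rightarrow> 'a::field vec set" where
  "Fsub d n = span_d d (set (map (unit_vec d) [n..<d]))"

definition Fix :: "nat \<Rightarrow> 'a::field mat \<Rightarrow> 'a vec set" where
  "Fix d g = {x \<in> carrier_vec d. rmult x g = x}"

definition weak_doubling :: "nat \<Rightarrow> nat \<Rightarrow> 'a::field mat \<Rightarrow> bool" where
  "weak_doubling d n c \<longleftrightarrow>
     (let n' = min (2*n - 1) d in
      subdim d (subsum (Vsub d n) ((\<lambda>x. rmult x c) ` Vsub d n)) = n' \<and>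
      (n' < d \<longrightarrow> subdim d (subsum (Fsub d n) (Fix d c)) = d))"

definition Eij :: "nat \<Rightarrow> nat \<Rightarrow> nat \<Rightarrow> 'a::field \<Rightarrow> 'a mat" where
  "Eij d i j l = mat d d (\<lambda>(a,b). if a = i \<and> b = j then l else if a = b then 1 else 0)"

text \<open>Permutation matrix with e_i P = e_{sigma(i)}: row i has its 1 in column sigma(i).\<close>
definition perm_mat :: "nat \<Rightarrow> (nat \<Rightarrow> nat) \<Rightarrow> 'a::field mat" where
  "perm_mat n \<sigma> = mat n n (\<lambda>(i,j). if j = \<sigma> i then 1 else 0)"

text \<open>Cycle (1,n,n-1,...,2) in 0-based form: 0 -> n-1, k -> k-1 for 1<=k<n.\<close>
definition cyc1 :: "nat \<Rightarrow> nat \<Rightarrow> nat" where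
  "cyc1 n i = (if i = 0 then n - 1 else i - 1)"

text \<open>Cycle (2,n,n-1,...,3) in 0-based form: 0 fixed, 1 -> n-1, k -> k-1 for 2<=k<n.\<close>
definition cyc2 :: "nat \<Rightarrow> nat \<Rightarrow> nat" where
  "cyc2 n i = (if i = 0 then 0 else if i = 1 then n - 1 else i - 1)"

definition z1 :: "nat \<Rightarrow> 'a::field mat" where
  "z1 n = (if even n then update_mat (perm_mat n (cyc1 n)) (0, n - 1) (-1) else perm_mat n (cyc1 n))"

definition z2 :: "nat \<Rightarrow> 'a::field mat" where
  "z2 n = (if odd n then update_mat (perm_mat n (cyc2 n)) (1, n - 1) (-1) else perm_mat n (cyc2 n))"

definition blockdiag_id :: "nat \<Rightarrow> nat \<Rightarrow> 'a::field mat \<Rightarrow> 'a mat" where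
  "blockdiag_id d n z = four_block_mat z (0\<^sub>m n (d - n)) (0\<^sub>m (d - n) n) (1\<^sub>m (d - n))"

definition t_elem :: "nat \<Rightarrow> nat \<Rightarrow> 'a::{field,finite} mat" where
  "t_elem d n = (if n = 2 then Eij d 0 1 1
     else if CHAR('a) = 2 then blockdiag_id d n (z1 n)
     else blockdiag_id d n (z2 n))"

end

theory Submission
  imports Defs "Jordan_Normal_Form.DL_Rank"
begin

lemma rmult_index:
  assumes "M \<in> carrier_mat d d" "x \<in> carrier_vec d" "j < d"
  shows "rmult x M $ j = (\<Sum>i<d. M $$ (i,j) * x $ i)"
  using assms unfolding rmult_def
  by (auto simp: scalar_prod_def atLeast0LessThan mult.commute intro!: sum.cong)

lemma rmult_carrier[simp]:
  assumes "M \<in> carrier_mat d d" "x \<in> carrier_vec d"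
  shows "rmult x M \<in> carrier_vec d"
  using assms unfolding rmult_def by auto

lemma dim_rmult[simp]: "dim_vec (rmult x M) = dim_col M"
  unfolding rmult_def by simp

lemma rmult_add:
  assumes "M \<in> carrier_mat d d" "x \<in> carrier_vec d" "y \<in> carrier_vec d"
  shows "rmult (x + y) M = rmult x M + rmult y M"
  using assms unfolding rmult_def by (auto simp: mult_add_distrib_mat_vec)

lemma rmult_smult:
  assumes "M \<in> carrier_mat d d" "x \<in> carrier_vec d"
  shows "rmult (c \<cdot>\<^sub>v x) M = c \<cdot>\<^sub>v rmult x M"
  using assms unfolding rmult_def by (auto simp: mult_mat_vec)

lemma rmult_mult:
  assumes "M \<in> carrier_mat d d" "N \<in> carrier_mat d d" "x \<in> carrier_vec d"
  shows "rmult x (M * N) = rmult (rmult x M) N"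
  using assms unfolding rmult_def by (simp add: transpose_mult[of M d d N d])

lemma rmult_one[simp]:
  assumes "x \<in> carrier_vec d"
  shows "rmult x (1\<^sub>m d) = x"
  using assms unfolding rmult_def by auto

lemma rmult_plus_mat:
  assumes "M \<in> carrier_mat d d" "N \<in> carrier_mat d d" "x \<in> carrier_vec d"
  shows "rmult x (M + N) = rmult x M + rmult x N"
  using assms unfolding rmult_def by (simp add: transpose_add add_mult_distrib_mat_vec[of _ d d])

lemma rmult_minus_mat:
  assumes "M \<in> carrier_mat d d" "N \<in> carrier_mat d d" "x \<in> carrier_vec d"
  shows "rmult x (M - N) = rmult x M - rmult x N"
  using assms unfolding rmult_def by (simp add: transpose_minus minus_mult_distrib_mat_vec[of _ d d])

lemma rmult_zero[simp]:
  assumes "M \<in> carrier_mat d d"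
  shows "rmult (0\<^sub>v d) M = 0\<^sub>v d"
  using assms unfolding rmult_def by auto

lemma rmult_unit:
  assumes "M \<in> carrier_mat d d" "i < d" "j < d"
  shows "rmult (unit_vec d i) M $ j = M $$ (i,j)"
proof -
  have "rmult (unit_vec d i) M $ j = (\<Sum>k<d. M $$ (k,j) * unit_vec d i $ k)"
    using assms by (simp add: rmult_index)
  also have "\<dots> = (\<Sum>k<d. if k = i then M $$ (k,j) else 0)"
    by (rule sum.cong, auto simp: assms)
  also have "\<dots> = M $$ (i,j)" using assms by simp
  finally show ?thesis .
qed

lemma mat_eq_rmult:
  assumes "M \<in> carrier_mat d d" "N \<in> carrier_mat d d"
    and "\<And>x. x \<in> carrier_vec d \<Longrightarrow> rmult x M = rmult x N"
  shows "M = N"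
proof (rule eq_matI)
  fix i j assume "i < dim_row N" "j < dim_col N"
  hence ij: "i < d" "j < d" using assms by auto
  have "M $$ (i,j) = rmult (unit_vec d i) M $ j" using rmult_unit assms ij by metis
  also have "\<dots> = rmult (unit_vec d i) N $ j" using assms by simp
  also have "\<dots> = N $$ (i,j)" using rmult_unit assms ij by metis
  finally show "M $$ (i,j) = N $$ (i,j)" .
qed (use assms in auto)

lemma sum_single:
  assumes "p < d"
  shows "(\<Sum>i<d. (if i = p then s else 0) * (x::'a::field vec) $ i) = s * x $ p"
proof -
  have "(\<Sum>i<d. (if i = p then s else 0) * x $ i) = (\<Sum>i<d. if i = p then s * x $ p else 0)"
    by (rule sum.cong, auto)
  also have "\<dots> = s * x $ p" using assms by simp
  finally show ?thesis .
qed


definition Am :: "nat \<Rightarrow> nat \<Rightarrow> 'a::field mat" where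
  "Am d n = mat d d (\<lambda>(i,j). if 1 \<le> i \<and> i < n \<and> j = n + i - 1 then 1 else 0)"
definition Bm :: "nat \<Rightarrow> nat \<Rightarrow> 'a::field mat" where
  "Bm d n = mat d d (\<lambda>(i,j). if n \<le> i \<and> i < 2*n \<and> j = i - n then 1 else 0)"
definition av :: "nat \<Rightarrow> nat \<Rightarrow> 'a::field vec \<Rightarrow> 'a vec" where
  "av d n x = vec d (\<lambda>j. if n \<le> j \<and> j < 2*n - 1 then x $ (j + 1 - n) else 0)"
definition bv :: "nat \<Rightarrow> nat \<Rightarrow> 'a::field vec \<Rightarrow> 'a vec" where
  "bv d n x = vec d (\<lambda>j. if j < n \<and> n + j < d then x $ (n + j) else 0)"
definition Pm :: "nat \<Rightarrow> nat \<Rightarrow> 'a::field mat" where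
  "Pm d n = (1\<^sub>m d + Bm d n) * (1\<^sub>m d + Am d n)"
definition Em :: "nat \<Rightarrow> nat \<Rightarrow> 'a::field mat" where
  "Em d n = (1\<^sub>m d - Am d n) * (1\<^sub>m d - Bm d n)"

lemma Am_carrier[simp]: "Am d n \<in> carrier_mat d d" unfolding Am_def by auto
lemma Bm_carrier[simp]: "Bm d n \<in> carrier_mat d d" unfolding Bm_def by auto
lemma Pm_carrier[simp]: "Pm d n \<in> carrier_mat d d" unfolding Pm_def
  by (meson Am_carrier Bm_carrier add_carrier_mat mult_carrier_mat one_carrier_mat)
lemma Em_carrier[simp]: "Em d n \<in> carrier_mat d d" unfolding Em_def
  by (meson Am_carrier Bm_carrier minus_carrier_mat mult_carrier_mat one_carrier_mat)
lemma dim_av[simp]: "dim_vec (av d n x) = d" unfolding av_def by simp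
lemma dim_bv[simp]: "dim_vec (bv d n x) = d" unfolding bv_def by simp
lemma av_carrier[simp]: "av d n x \<in> carrier_vec d" unfolding av_def by auto
lemma bv_carrier[simp]: "bv d n x \<in> carrier_vec d" unfolding bv_def by auto

lemma rmult_Am:
  assumes "x \<in> carrier_vec d" "n \<le> d" "1 \<le> n"
  shows "rmult x (Am d n) = av d n x"
proof (rule eq_vecI)
  fix j assume "j < dim_vec (av d n x)"
  hence j: "j < d" by (simp add: av_def)
  have "rmult x (Am d n) $ j = (\<Sum>i<d. Am d n $$ (i,j) * x $ i)"
    using assms j by (simp add: rmult_index)
  also have "\<dots> = (\<Sum>i<d. (if i = j + 1 - n then (if n \<le> j \<and> j < 2*n - 1 then 1 else 0) else 0) * x $ i)"
    by (rule sum.cong, auto simp: Am_def j)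
  also have "\<dots> = av d n x $ j"
    using sum_single[of "j + 1 - n" d 1 x] j assms by (auto simp: av_def)
  finally show "rmult x (Am d n) $ j = av d n x $ j" .
qed (use assms in \<open>auto simp: Am_def av_def\<close>)

lemma rmult_Bm:
  assumes "x \<in> carrier_vec d"
  shows "rmult x (Bm d n) = bv d n x"
proof (rule eq_vecI)
  fix j assume "j < dim_vec (bv d n x)"
  hence j: "j < d" by (simp add: bv_def)
  have "rmult x (Bm d n) $ j = (\<Sum>i<d. Bm d n $$ (i,j) * x $ i)"
    using assms j by (simp add: rmult_index)
  also have "\<dots> = (\<Sum>i<d. (if i = n + j then (if j < n \<and> n + j < d then 1 else 0) else 0) * x $ i)"
    by (rule sum.cong, auto simp: Bm_def j)
  also have "\<dots> = bv d n x $ j"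
  proof (cases "n + j < d")
    case True thus ?thesis using sum_single[of "n + j" d 1 x] j by (auto simp: bv_def)
  next
    case False thus ?thesis using j by (auto simp: bv_def intro!: sum.neutral)
  qed
  finally show "rmult x (Bm d n) $ j = bv d n x $ j" .
qed (use assms in \<open>auto simp: Bm_def bv_def\<close>)

definition Pf :: "nat \<Rightarrow> nat \<Rightarrow> 'a::field vec \<Rightarrow> 'a vec" where
  "Pf d n x = (x + bv d n x) + av d n (x + bv d n x)"
definition Ef :: "nat \<Rightarrow> nat \<Rightarrow> 'a::field vec \<Rightarrow> 'a vec" where
  "Ef d n x = (x - av d n x) - bv d n (x - av d n x)"

lemma Pf_carrier[simp]: "x \<in> carrier_vec d \<Longrightarrow> Pf d n x \<in> carrier_vec d"
  unfolding Pf_def by auto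
lemma Ef_carrier[simp]: "x \<in> carrier_vec d \<Longrightarrow> Ef d n x \<in> carrier_vec d"
  unfolding Ef_def by auto

lemma rmult_Pm:
  assumes "x \<in> carrier_vec d" "n \<le> d" "1 \<le> n"
  shows "rmult x (Pm d n) = Pf d n x"
proof -
  have c: "1\<^sub>m d + Bm d n \<in> carrier_mat d d" "1\<^sub>m d + Am d n \<in> carrier_mat d d" by auto
  show ?thesis
    using assms unfolding Pm_def Pf_def
    apply (simp add: rmult_mult[OF c])
    apply (subst rmult_plus_mat[of "1\<^sub>m d" d "Bm d n"], auto)
    apply (subst rmult_plus_mat[of "1\<^sub>m d" d "Am d n"], auto simp: rmult_Am rmult_Bm)
    done
qed

lemma rmult_Em:
  assumes "x \<in> carrier_vec d" "n \<le> d" "1 \<le> n"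
  shows "rmult x (Em d n) = Ef d n x"
proof -
  have c: "1\<^sub>m d - Am d n \<in> carrier_mat d d" "1\<^sub>m d - Bm d n \<in> carrier_mat d d"
    by (meson Am_carrier Bm_carrier minus_carrier_mat one_carrier_mat)+
  show ?thesis
    using assms unfolding Em_def Ef_def
    apply (simp add: rmult_mult[OF c])
    apply (subst rmult_minus_mat[of "1\<^sub>m d" d "Am d n"], auto)
    apply (subst rmult_minus_mat[of "1\<^sub>m d" d "Bm d n"], auto simp: rmult_Am rmult_Bm)
    done
qed

lemma Ef_Pf:
  assumes "x \<in> carrier_vec d"
  shows "Ef d n (Pf d n x) = x"
  by (rule eq_vecI, insert assms, auto simp: Ef_def Pf_def av_def bv_def)

lemma Pf_Ef:
  assumes "x \<in> carrier_vec d"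
  shows "Pf d n (Ef d n x) = x"
  by (rule eq_vecI, insert assms, auto simp: Ef_def Pf_def av_def bv_def)


lemma Pm_Em: assumes "n \<le> d" "1 \<le> n" shows "Pm d n * Em d n = 1\<^sub>m d"
proof (rule mat_eq_rmult[of _ d])
  fix x :: "'a vec" assume x: "x \<in> carrier_vec d"
  show "rmult x (Pm d n * Em d n) = rmult x (1\<^sub>m d)"
    using x assms by (simp add: rmult_mult[of _ d] rmult_Pm rmult_Em Ef_Pf)
qed (auto intro: mult_carrier_mat[OF Pm_carrier Em_carrier])

lemma Em_Pm: assumes "n \<le> d" "1 \<le> n" shows "Em d n * Pm d n = 1\<^sub>m d"
proof (rule mat_eq_rmult[of _ d])
  fix x :: "'a vec" assume x: "x \<in> carrier_vec d"
  have "Ef d n x \<in> carrier_vec d" unfolding Ef_def using x by auto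
  thus "rmult x (Em d n * Pm d n) = rmult x (1\<^sub>m d)"
    using x assms by (simp add: rmult_mult[of _ d] rmult_Pm rmult_Em Pf_Ef)
qed (auto intro: mult_carrier_mat[OF Em_carrier Pm_carrier])

lemma inv_Em: assumes "n \<le> d" "1 \<le> n" shows "the (mat_inverse (Em d n)) = (Pm d n :: 'a::field mat)"
proof (cases "mat_inverse (Em d n :: 'a mat)")
  case None
  from mat_inverse(1)[OF Em_carrier None, of d]
  have "Em d n \<notin> Units (ring_mat TYPE('a) d d)" .
  moreover have "Em d n \<in> Units (ring_mat TYPE('a) d d)"
    unfolding Units_def using Pm_Em[OF assms] Em_Pm[OF assms]
    by (auto simp: ring_mat_def) 
  ultimately show ?thesis by blast
next
  case (Some B)
  from mat_inverse(2)[OF Em_carrier Some] have B: "Em d n * B = 1\<^sub>m d" "B \<in> carrier_mat d d" by auto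
  have "Pm d n = Pm d n * (Em d n * B)" using B(1) right_mult_one_mat[OF Pm_carrier, of d n] by metis
  also have "\<dots> = (Pm d n * Em d n) * B" using B by (simp add: assoc_mult_mat[of _ d d _ d _ d])
  also have "\<dots> = B" using Pm_Em[OF assms] left_mult_one_mat[OF B(2)] by metis
  finally show ?thesis using Some by simp
qed

lemma det_Em: assumes "2 \<le> n" shows "det (Em d n :: 'a::field mat) = 1"
proof -
  have c: "1\<^sub>m d - Am d n \<in> carrier_mat d d" "1\<^sub>m d - Bm d n \<in> carrier_mat d d"
    by (meson Am_carrier Bm_carrier minus_carrier_mat one_carrier_mat)+
  have "det (1\<^sub>m d - Am d n :: 'a mat) = prod_list (diag_mat (1\<^sub>m d - Am d n :: 'a mat))"
    by (rule det_upper_triangular[OF _ c(1)], insert assms, auto simp: upper_triangular_def Am_def)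
  also have "diag_mat (1\<^sub>m d - Am d n :: 'a mat) = replicate d 1"
    using assms by (auto simp: diag_mat_def Am_def intro!: nth_equalityI)
  finally have 1: "det (1\<^sub>m d - Am d n :: 'a mat) = 1" by simp
  have "det (1\<^sub>m d - Bm d n :: 'a mat) = prod_list (diag_mat (1\<^sub>m d - Bm d n :: 'a mat))"
    by (rule det_lower_triangular[OF _ c(2)], insert assms, auto simp: Bm_def)
  also have "diag_mat (1\<^sub>m d - Bm d n :: 'a mat) = replicate d 1"
    using assms by (auto simp: diag_mat_def Bm_def intro!: nth_equalityI)
  finally have 2: "det (1\<^sub>m d - Bm d n :: 'a mat) = 1" by simp
  have "det (Em d n :: 'a mat) = det (1\<^sub>m d - Am d n :: 'a mat) * det (1\<^sub>m d - Bm d n :: 'a mat)"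
    unfolding Em_def by (rule det_mult[OF c])
  with 1 2 show ?thesis by simp
qed


lemma span_units:
  fixes d :: nat assumes I: "I \<subseteq> {..<d}"
  shows "span_d d (unit_vec d ` I :: 'a::field vec set) = {v \<in> carrier_vec d. \<forall>j<d. j \<notin> I \<longrightarrow> v $ j = 0}"
proof -
  interpret V: vec_space "TYPE('a)" d .
  have fin: "finite I" using assms finite_subset by auto
  have sub: "unit_vec d ` I \<subseteq> carrier_vec d" by auto
  show ?thesis unfolding span_d_def
  proof (intro equalityI subsetI)
    fix v assume vs: "v \<in> V.span (unit_vec d ` I)"
    then obtain a A where v: "v = V.lincomb a A" "finite A" "A \<subseteq> unit_vec d ` I"
      using V.in_spanE by blast
    have vc: "v \<in> carrier_vec d" using V.span_closed[OF _ vs] sub by auto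
    have Ac: "A \<subseteq> carrier_vec d" using v(3) sub by auto
    { fix j assume j: "j < d" "j \<notin> I"
      have "v $ j = (\<Sum>x\<in>A. a x * x $ j)" using V.lincomb_index[OF j(1) Ac] v(1) by simp
      also have "\<dots> = 0"
      proof (rule sum.neutral, rule ballI)
        fix x assume "x \<in> A"
        then obtain i where i: "i \<in> I" "x = unit_vec d i" using v(3) by auto
        have "i < d" using i I by auto
        thus "a x * x $ j = 0" using i j by auto
      qed
      finally have "v $ j = 0" . }
    thus "v \<in> {v \<in> carrier_vec d. \<forall>j<d. j \<notin> I \<longrightarrow> v $ j = 0}" using vc by auto
  next
    fix v :: "'a vec" assume v: "v \<in> {v \<in> carrier_vec d. \<forall>j<d. j \<notin> I \<longrightarrow> v $ j = 0}"
    define c :: "'a vec \<Rightarrow> 'a" where "c = (\<lambda>u. v $ (THE i. u = unit_vec d i \<and> i < d))"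
    have inj: "inj_on (unit_vec d) I" using I by (auto simp: inj_on_def)
    have cu: "c (unit_vec d i) = v $ i" if "i < d" for i
    proof -
      have h: "(THE k. unit_vec d i = unit_vec d k \<and> k < d) = i"
        by (rule the_equality) (insert that, auto)
      show ?thesis unfolding c_def h ..
    qed
    have "V.lincomb c (unit_vec d ` I) = v"
    proof (rule eq_vecI)
      fix j assume "j < dim_vec v"
      hence j: "j < d" using v by auto
      have "V.lincomb c (unit_vec d ` I) $ j = (\<Sum>x\<in>unit_vec d ` I. c x * x $ j)"
        using V.lincomb_index[OF j sub] by simp
      also have "\<dots> = (\<Sum>i\<in>I. c (unit_vec d i) * unit_vec d i $ j)"
        by (subst sum.reindex[OF inj], simp)
      also have "\<dots> = (\<Sum>i\<in>I. if i = j then v $ j else 0)"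
        by (rule sum.cong, insert I j cu, auto)
      also have "\<dots> = v $ j" using fin v j by auto
      finally show "V.lincomb c (unit_vec d ` I) $ j = v $ j" .
    qed (insert v fin sub V.lincomb_dim[OF _ sub, of c], auto)
    thus "v \<in> V.span (unit_vec d ` I)"
      using V.in_spanI[of v c "unit_vec d ` I" "unit_vec d ` I"] fin by auto
  qed
qed

lemma Vsub_char: assumes "k \<le> d"
  shows "(Vsub d k :: 'a::field vec set) = {v \<in> carrier_vec d. \<forall>j<d. k \<le> j \<longrightarrow> v $ j = 0}"
proof -
  have e: "set (map (unit_vec d) [0..<k]) = unit_vec d ` {0..<k}" by simp
  have "{0..<k} \<subseteq> {..<d}" using assms by auto
  from span_units[OF this] show ?thesis unfolding Vsub_def e
    by (auto simp: not_less)
qed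

lemma Fsub_char: 
  shows "(Fsub d n :: 'a::field vec set) = {v \<in> carrier_vec d. \<forall>j<d. j < n \<longrightarrow> v $ j = 0}"
proof -
  have e: "set (map (unit_vec d) [n..<d]) = unit_vec d ` {n..<d}" by simp
  have "{n..<d} \<subseteq> {..<d}" by auto
  from span_units[OF this] show ?thesis unfolding Fsub_def e
    by (auto simp: not_le)
qed

lemma subdim_Vsub: assumes "k \<le> d"
  shows "subdim d (Vsub d k :: 'a::field vec set) = k"
proof -
  interpret V: vec_space "TYPE('a)" d .
  let ?S = "unit_vec d ` {0..<k} :: 'a vec set"
  have S: "set (map (unit_vec d) [0..<k]) = ?S" by simp
  have sub: "?S \<subseteq> carrier_vec d" by auto
  have "?S \<subseteq> set (unit_vecs d)" using assms by (auto simp: unit_vecs_def)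
  hence li: "V.lin_indpt ?S" using V.unit_vecs_basis V.subset_li_is_li unfolding V.basis_def by blast
  have max: "maximal ?S (\<lambda>T. T \<subseteq> ?S \<and> V.lin_indpt T)" unfolding maximal_def using li by auto
  have inj: "inj_on (unit_vec d) {0..<k}" using assms by (auto simp: inj_on_def)
  have "vectorspace.dim class_ring (V.span_vs ?S) = card ?S"
    by (rule V.dim_span[OF sub _ max], simp)
  also have "\<dots> = k" using card_image[OF inj] by simp
  finally show ?thesis unfolding subdim_def Vsub_def span_d_def S .
qed


definition Zs :: "nat \<Rightarrow> nat \<Rightarrow> 'a::field vec set" where
  "Zs d k = {v \<in> carrier_vec d. \<forall>j<d. k \<le> j \<longrightarrow> v $ j = 0}"

locale setting =
  fixes d n :: nat and t :: "'a::field mat"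
  assumes n2: "2 \<le> n" and nd: "n < d" and tc: "t \<in> carrier_mat d d"
    and H1: "\<And>x. x \<in> Zs d n \<Longrightarrow> rmult x t \<in> Zs d n"
    and H2: "\<And>x. x \<in> carrier_vec d \<Longrightarrow> (\<forall>j<n. x $ j = 0) \<Longrightarrow> rmult x t = x"
begin

definition "Tm = Pm d n * t * Em d n"
definition "np = min (2*n - 1) d"
definition "S = subsum (Zs d n) ((\<lambda>x. rmult x Tm) ` Zs d n)"

lemma Tm_carrier[simp]: "Tm \<in> carrier_mat d d"
  unfolding Tm_def using tc by (meson Pm_carrier Em_carrier mult_carrier_mat)
lemma dims[simp]: "dim_col Tm = d" "dim_row Tm = d" "dim_col t = d" "dim_row t = d"
  using Tm_carrier tc by (auto simp del: Tm_carrier)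

lemma Tv: assumes "x \<in> carrier_vec d" shows "rmult x Tm = Ef d n (rmult (Pf d n x) t)"
proof -
  have c: "Pm d n * t \<in> carrier_mat d d" using tc by (meson Pm_carrier mult_carrier_mat)
  show ?thesis unfolding Tm_def using assms nd n2 tc
    by (simp add: rmult_mult[OF c] rmult_mult[of _ d t] rmult_Pm rmult_Em)
qed

lemma Pf_Zs: assumes "x \<in> Zs d n" shows "Pf d n x = x + av d n x"
  by (rule eq_vecI, insert assms, auto simp: Pf_def av_def bv_def Zs_def)

lemma av_Fc: "rmult (av d n x) t = av d n x"
  by (rule H2, insert nd, auto simp: av_def)

lemma Tv_Zs: assumes x: "x \<in> Zs d n"
  shows "rmult x Tm = Ef d n (rmult x t + av d n x)"
proof -
  have xc: "x \<in> carrier_vec d" using x by (simp add: Zs_def)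
  show ?thesis using xc
    by (simp add: Tv Pf_Zs[OF x] rmult_add[OF tc] av_Fc)
qed

lemma K1: assumes x: "x \<in> Zs d n" shows "rmult x Tm \<in> Zs d np"
proof -
  have xc: "x \<in> carrier_vec d" using x by (simp add: Zs_def)
  have w: "rmult x t \<in> Zs d n" using H1[OF x] .
  show ?thesis unfolding Tv_Zs[OF x] using w x xc n2 tc
    by (auto simp: Zs_def Ef_def av_def bv_def np_def)
qed

lemma K2: assumes x: "x \<in> Zs d n"
  shows "rmult x Tm = x + (rmult x t - x) - av d n (rmult x t - x) + bv d n (av d n (rmult x t - x))"
proof -
  have xc: "x \<in> carrier_vec d" using x by (simp add: Zs_def)
  have w: "rmult x t \<in> Zs d n" using H1[OF x] .
  show ?thesis unfolding Tv_Zs[OF x] using w x xc n2 tc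
    by (intro eq_vecI, auto simp: Zs_def Ef_def av_def bv_def)
qed

lemma S_carrier: "S \<subseteq> carrier_vec d"
  unfolding S_def subsum_def Zs_def by auto

lemma S_add: assumes "a \<in> S" "b \<in> S" shows "a + b \<in> S"
proof -
  from assms obtain u1 w1 u2 w2 where a: "a = u1 + rmult w1 Tm" "u1 \<in> Zs d n" "w1 \<in> Zs d n"
    and b: "b = u2 + rmult w2 Tm" "u2 \<in> Zs d n" "w2 \<in> Zs d n"
    unfolding S_def subsum_def by auto
  have c: "u1 \<in> carrier_vec d" "u2 \<in> carrier_vec d" "w1 \<in> carrier_vec d" "w2 \<in> carrier_vec d"
    using a b by (auto simp: Zs_def)
  have "a + b = (u1 + u2) + rmult (w1 + w2) Tm"
    unfolding a b rmult_add[OF Tm_carrier c(3,4)]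
    by (rule eq_vecI, insert c, auto)
  moreover have "u1 + u2 \<in> Zs d n" "w1 + w2 \<in> Zs d n" using a b c by (auto simp: Zs_def)
  ultimately show ?thesis unfolding S_def subsum_def by blast
qed

lemma S_smult: assumes "a \<in> S" shows "c \<cdot>\<^sub>v a \<in> S"
proof -
  from assms obtain u1 w1 where a: "a = u1 + rmult w1 Tm" "u1 \<in> Zs d n" "w1 \<in> Zs d n"
    unfolding S_def subsum_def by auto
  have cc: "u1 \<in> carrier_vec d" "w1 \<in> carrier_vec d"
    using a by (auto simp: Zs_def)
  have "c \<cdot>\<^sub>v a = (c \<cdot>\<^sub>v u1) + rmult (c \<cdot>\<^sub>v w1) Tm"
    unfolding a rmult_smult[OF Tm_carrier cc(2)]
    by (rule eq_vecI, insert cc, auto simp: algebra_simps)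
  moreover have "c \<cdot>\<^sub>v u1 \<in> Zs d n" "c \<cdot>\<^sub>v w1 \<in> Zs d n" using a cc by (auto simp: Zs_def)
  ultimately show ?thesis unfolding S_def subsum_def by blast
qed

lemma S_minus: assumes "a \<in> S" "b \<in> S" shows "a - b \<in> S"
proof -
  have "a - b = a + (-1) \<cdot>\<^sub>v b"
    using assms S_carrier by (intro eq_vecI, auto)
  thus ?thesis using S_add S_smult assms by metis
qed

lemma Zs_S: assumes "u \<in> Zs d n" shows "u \<in> S"
proof -
  have "u = u + rmult (0\<^sub>v d) Tm" using assms by (auto simp: Zs_def)
  moreover have "0\<^sub>v d \<in> Zs d n" by (auto simp: Zs_def)
  ultimately show ?thesis using assms unfolding S_def subsum_def by blast
qed

lemma K3: assumes x: "x \<in> Zs d n" shows "av d n (rmult x t - x) \<in> S"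
proof -
  have xc: "x \<in> carrier_vec d" using x by (simp add: Zs_def)
  have w: "rmult x t \<in> Zs d n" using H1[OF x] .
  define z where "z = x + (rmult x t - x) + bv d n (av d n (rmult x t - x))"
  have z: "z \<in> Zs d n" using w xc unfolding z_def by (auto simp: Zs_def bv_def)
  have mx: "(-1) \<cdot>\<^sub>v x \<in> Zs d n" using x by (auto simp: Zs_def)
  have "av d n (rmult x t - x) = z + rmult ((-1) \<cdot>\<^sub>v x) Tm"
    unfolding rmult_smult[OF Tm_carrier xc] K2[OF x] z_def using w xc
    by (intro eq_vecI, auto simp: Zs_def)
  thus ?thesis using z mx unfolding S_def subsum_def by blast
qed


lemma av_unit: assumes "1 \<le> i" "i < n" "n + i - 1 < d"
  shows "av d n (unit_vec d i) = unit_vec d (n + i - 1)"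
  by (rule eq_vecI, insert assms nd, auto simp: av_def)

lemma np_props: "n \<le> np" "np \<le> d" "np \<le> 2*n - 1"
  unfolding np_def using nd by auto

lemma S_eq: assumes G: "\<And>i. 1 \<le> i \<Longrightarrow> i < n \<Longrightarrow> av d n (unit_vec d i) \<in> S"
  shows "S = Zs d np"
proof (intro equalityI subsetI)
  fix s assume "s \<in> S"
  then obtain u w where s: "s = u + rmult w Tm" "u \<in> Zs d n" "w \<in> Zs d n"
    unfolding S_def subsum_def by auto
  have "rmult w Tm \<in> Zs d np" using K1[OF s(3)] .
  thus "s \<in> Zs d np" using s np_props by (auto simp: Zs_def)
next
  have "\<forall>k. k \<le> np - n \<longrightarrow> Zs d (n + k) \<subseteq> S"
  proof (intro allI)
    fix k show "k \<le> np - n \<longrightarrow> Zs d (n + k) \<subseteq> S"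
    proof (induction k)
      case 0 thus ?case using Zs_S by auto
    next
      case (Suc k)
      show ?case
      proof (intro impI subsetI)
        fix v :: "'a vec" assume k: "Suc k \<le> np - n" and v: "v \<in> Zs d (n + Suc k)"
        let ?j = "n + k"
        have j: "?j < d" "?j < 2*n - 1" using k np_props by auto
        have vc: "v \<in> carrier_vec d" using v by (simp add: Zs_def)
        have sk: "Suc k < n" using j by linarith
        have e: "av d n (unit_vec d (Suc k)) = unit_vec d ?j"
          using av_unit[of "Suc k"] j sk by auto
        have eS: "unit_vec d ?j \<in> S" unfolding e[symmetric] by (rule G, insert sk, auto)
        have r: "v - (v $ ?j) \<cdot>\<^sub>v unit_vec d ?j \<in> Zs d (n + k)"
          using v vc j by (auto simp: Zs_def)
        have rS: "v - (v $ ?j) \<cdot>\<^sub>v unit_vec d ?j \<in> S" using r Suc k by auto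
        have "v = (v - (v $ ?j) \<cdot>\<^sub>v unit_vec d ?j) + (v $ ?j) \<cdot>\<^sub>v unit_vec d ?j"
          using vc by (intro eq_vecI, auto)
        thus "v \<in> S" using S_add[OF rS S_smult[OF eS, of "v $ ?j"]] by metis
      qed
    qed
  qed
  hence "Zs d (n + (np - n)) \<subseteq> S" by blast
  moreover have "n + (np - n) = np" using np_props by auto
  ultimately show "\<And>x. x \<in> Zs d np \<Longrightarrow> x \<in> S" by auto
qed

lemma Fix_eq: assumes big: "2*n - 1 < d"
  shows "subsum (Fsub d n) (Fix d Tm) = Zs d d"
proof (intro equalityI subsetI)
  fix s assume "s \<in> subsum (Fsub d n) (Fix d Tm)"
  thus "s \<in> Zs d d" unfolding subsum_def Fsub_char Fix_def Zs_def by auto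
next
  fix v :: "'a vec" assume "v \<in> Zs d d"
  hence vc: "v \<in> carrier_vec d" by (simp add: Zs_def)
  define y :: "'a vec" where "y = vec d (\<lambda>j. if j < n then v $ j else if j < 2*n then - v $ (j - n) else 0)"
  define h :: "'a vec" where "h = vec d (\<lambda>j. if n \<le> j \<and> j < 2*n then - v $ (j - n) else 0)"
  have hc: "h \<in> carrier_vec d" "y \<in> carrier_vec d" unfolding h_def y_def by auto
  have Eh: "Ef d n h = y"
    unfolding Ef_def h_def y_def using big vc by (intro eq_vecI, auto simp: av_def bv_def)
  have Py: "Pf d n y = h" using Pf_Ef[OF hc(1), of n] unfolding Eh .
  have th: "rmult h t = h" by (rule H2[OF hc(1)], insert nd, auto simp: h_def)
  have "rmult y Tm = y" unfolding Tv[OF hc(2)] Py th Eh ..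
  hence yF: "y \<in> Fix d Tm" using hc unfolding Fix_def by auto
  have vy: "v - y \<in> Fsub d n" unfolding Fsub_char y_def using vc by auto
  have "v = (v - y) + y" using vc hc by (intro eq_vecI, auto)
  thus "v \<in> subsum (Fsub d n) (Fix d Tm)" using vy yF unfolding subsum_def by blast
qed


lemma main_wd:
  assumes G: "\<And>i. 1 \<le> i \<Longrightarrow> i < n \<Longrightarrow> av d n (unit_vec d i) \<in> S"
  shows "weak_doubling d n Tm"
proof -
  have Vn: "Vsub d n = Zs d n" using Vsub_char[of n d] nd by (simp add: Zs_def)
  have Vnp: "Vsub d np = Zs d np" using Vsub_char[of np d] np_props by (simp add: Zs_def)
  have Vd: "Vsub d d = Zs d d" using Vsub_char[of d d] by (simp add: Zs_def)
  have 1: "subdim d (subsum (Vsub d n) ((\<lambda>x. rmult x Tm) ` Vsub d n)) = np"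
  proof -
    have "subsum (Vsub d n) ((\<lambda>x. rmult x Tm) ` Vsub d n) = Vsub d np"
      using S_eq[OF G] unfolding S_def Vn Vnp by simp
    thus ?thesis using subdim_Vsub[OF np_props(2)] by simp
  qed
  have 2: "subdim d (subsum (Fsub d n) (Fix d Tm)) = d" if "np < d"
  proof -
    have "2*n - 1 < d" using that unfolding np_def by auto
    hence "subsum (Fsub d n) (Fix d Tm) = Vsub d d" using Fix_eq Vd by metis
    thus ?thesis using subdim_Vsub[of d d] by simp
  qed
  show ?thesis unfolding weak_doubling_def Let_def np_def[symmetric] using 1 2 by auto
qed

lemma av_minus: "a \<in> carrier_vec d \<Longrightarrow> b \<in> carrier_vec d \<Longrightarrow> av d n (a - b) = av d n a - av d n b"
  by (rule eq_vecI, auto simp: av_def)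

lemma chain:
  assumes D: "\<And>i. 2 \<le> i \<Longrightarrow> i < n \<Longrightarrow> av d n (unit_vec d (i - 1)) - av d n (unit_vec d i) \<in> S"
  shows "\<forall>i. 1 \<le> i \<longrightarrow> i < n \<longrightarrow> av d n (unit_vec d 1) - av d n (unit_vec d i) \<in> S"
proof (intro allI)
  fix i show "1 \<le> i \<longrightarrow> i < n \<longrightarrow> av d n (unit_vec d 1) - av d n (unit_vec d i) \<in> S"
  proof (induction i)
    case 0 thus ?case by simp
  next
    case (Suc i)
    show ?case
    proof (intro impI)
      assume i: "1 \<le> Suc i" "Suc i < n"
      show "av d n (unit_vec d 1) - av d n (unit_vec d (Suc i)) \<in> S"
      proof (cases "i = 0")
        case True
        have "av d n (unit_vec d 1) - av d n (unit_vec d 1) = 0\<^sub>v d"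
          by (rule eq_vecI, auto)
        moreover have "0\<^sub>v d \<in> S" by (rule Zs_S, auto simp: Zs_def)
        ultimately show ?thesis using True by (metis One_nat_def)
      next
        case False
        have a: "av d n (unit_vec d 1) - av d n (unit_vec d i) \<in> S" using Suc.IH False i by auto
        have b: "av d n (unit_vec d i) - av d n (unit_vec d (Suc i)) \<in> S" using D[of "Suc i"] False i by auto
        have "av d n (unit_vec d 1) - av d n (unit_vec d (Suc i)) =
           (av d n (unit_vec d 1) - av d n (unit_vec d i)) + (av d n (unit_vec d i) - av d n (unit_vec d (Suc i)))"
          by (rule eq_vecI, auto)
        thus ?thesis using S_add[OF a b] by metis
      qed
    qed
  qed
qed

lemma G_from_chain:
  assumes D: "\<And>i. 2 \<le> i \<Longrightarrow> i < n \<Longrightarrow> av d n (unit_vec d (i - 1)) - av d n (unit_vec d i) \<in> S"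
    and one: "av d n (unit_vec d 1) \<in> S"
  shows "\<And>i. 1 \<le> i \<Longrightarrow> i < n \<Longrightarrow> av d n (unit_vec d i) \<in> S"
proof -
  fix i assume i: "1 \<le> i" "i < n"
  have a: "av d n (unit_vec d 1) - av d n (unit_vec d i) \<in> S" using chain[OF D] i by auto
  have "av d n (unit_vec d i) = av d n (unit_vec d 1) - (av d n (unit_vec d 1) - av d n (unit_vec d i))"
    by (rule eq_vecI, auto)
  thus "av d n (unit_vec d i) \<in> S" using S_minus[OF one a] by metis
qed

lemma K3u: assumes "i < n" "rmult (unit_vec d i) t = w"
  shows "av d n (w - unit_vec d i) \<in> S"
proof -
  have "unit_vec d i \<in> Zs d n" using assms nd by (auto simp: Zs_def)
  from K3[OF this] show ?thesis using assms by simp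
qed

end


lemma rmult_single_col:
  assumes "t \<in> carrier_mat d d" "x \<in> carrier_vec d" "j < d" "p < d"
    "\<And>i. i < d \<Longrightarrow> t $$ (i,j) = (if i = p then s else 0)"
  shows "rmult x t $ j = s * x $ p"
proof -
  have "rmult x t $ j = (\<Sum>i<d. t $$ (i,j) * x $ i)" using assms by (simp add: rmult_index)
  also have "\<dots> = (\<Sum>i<d. (if i = p then s else 0) * x $ i)" by (rule sum.cong, auto simp: assms)
  also have "\<dots> = s * x $ p" using sum_single[OF assms(4)] .
  finally show ?thesis .
qed

lemma blockdiag_carrier: "z \<in> carrier_mat n n \<Longrightarrow> n \<le> d \<Longrightarrow> blockdiag_id d n z \<in> carrier_mat d d"
  unfolding blockdiag_id_def using four_block_carrier_mat[of z n n "1\<^sub>m (d-n)" "d-n" "d-n"] by auto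

lemma blockdiag_index:
  assumes "z \<in> carrier_mat n n" "n \<le> d" "i < d" "j < d"
  shows "blockdiag_id d n z $$ (i,j) = (if i < n then (if j < n then z $$ (i,j) else 0)
      else (if j < n then 0 else (if i = j then 1 else 0)))"
  using assms unfolding blockdiag_id_def by auto

definition p1 :: "nat \<Rightarrow> nat \<Rightarrow> nat" where
  "p1 n j = (if j < n then (if j = n - 1 then 0 else j + 1) else j)"
definition p2 :: "nat \<Rightarrow> nat \<Rightarrow> nat" where
  "p2 n j = (if j = 0 then 0 else if j < n - 1 then j + 1 else if j = n - 1 then 1 else j)"

lemma z1_carrier: "(z1 n :: 'a::field mat) \<in> carrier_mat n n"
  unfolding z1_def perm_mat_def by auto
lemma z2_carrier: "(z2 n :: 'a::field mat) \<in> carrier_mat n n"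
  unfolding z2_def perm_mat_def by auto



lemma cyc1_iff: "i < n \<Longrightarrow> j < n \<Longrightarrow> (j = cyc1 n i) = (i = p1 n j)"
  unfolding cyc1_def p1_def by auto

lemma cyc2_iff: "2 \<le> n \<Longrightarrow> i < n \<Longrightarrow> j < n \<Longrightarrow> (j = cyc2 n i) = (i = p2 n j)"
  unfolding cyc2_def p2_def by auto

lemma z1_index: "odd n \<Longrightarrow> i < n \<Longrightarrow> j < n \<Longrightarrow> (z1 n :: 'a::field mat) $$ (i,j) = (if i = p1 n j then 1 else 0)"
  unfolding z1_def perm_mat_def using cyc1_iff[of i n j] by simp

lemma z2_index: assumes "odd n" "2 \<le> n" "i < n" "j < n"
  shows "(z2 n :: 'a::field mat) $$ (i,j) = (if i = p2 n j then (if j = n - 1 then -1 else 1) else 0)"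
proof -
  have n3: "3 \<le> n" using assms by presburger
  have c: "perm_mat n (cyc2 n) \<in> carrier_mat n n" unfolding perm_mat_def by auto
  have dm: "dim_row (perm_mat n (cyc2 n) :: 'a mat) = n" "dim_col (perm_mat n (cyc2 n) :: 'a mat) = n"
    unfolding perm_mat_def by auto
  show ?thesis
  proof (cases "(i,j) = (1, n - 1)")
    case True
    hence ij: "i = 1" "j = n - 1" by auto
    hence "i = p2 n j" using n3 by (auto simp: p2_def)
    moreover have "(z2 n :: 'a mat) $$ (i,j) = -1" unfolding z2_def ij using assms c n3
      by (simp, subst index_update_mat1, auto simp: perm_mat_def)
    ultimately show ?thesis using ij by simp
  next
    case False
    have zz: "(z2 n :: 'a mat) = update_mat (perm_mat n (cyc2 n)) (1, n - 1) (-1)"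
      unfolding z2_def by (rule if_P[OF assms(1)])
    have "(z2 n :: 'a mat) $$ (i,j) = perm_mat n (cyc2 n) $$ (i,j)"
      unfolding zz by (rule index_update_mat2, insert dm assms False, auto)
    also have "\<dots> = (if i = p2 n j then 1 else 0)"
      unfolding perm_mat_def using assms cyc2_iff[of n i j] by simp
    also have "\<dots> = (if i = p2 n j then (if j = n - 1 then -1 else 1) else 0)"
    proof (cases "i = p2 n j")
      case True
      have "j \<noteq> n - 1"
      proof
        assume "j = n - 1"
        hence "p2 n j = 1" using n3 by (simp add: p2_def)
        thus False using True False \<open>j = n - 1\<close> by simp
      qed
      thus ?thesis using True by simp
    qed simp
    finally show ?thesis .
  qed
qed

lemma bd_entry:
  assumes zc: "z \<in> carrier_mat n n" and nd: "n < d" and i: "i < d" and j: "j < d"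
    and p: "\<And>j. j < n \<Longrightarrow> p j < n" and pid: "\<And>j. n \<le> j \<Longrightarrow> p j = j"
    and sid: "\<And>j. n \<le> j \<Longrightarrow> s j = 1"
    and zi: "\<And>i j. i < n \<Longrightarrow> j < n \<Longrightarrow> z $$ (i,j) = (if i = p j then s j else 0)"
  shows "blockdiag_id d n z $$ (i,j) = (if i = p j then s j else 0)"
proof -
  have b: "blockdiag_id d n z $$ (i,j) = (if i < n then (if j < n then z $$ (i,j) else 0)
      else (if j < n then 0 else (if i = j then 1 else 0)))"
    using blockdiag_index[OF zc _ i j] nd by simp
  show ?thesis
  proof (cases "j < n")
    case True
    show ?thesis
    proof (cases "i < n")
      case True thus ?thesis using b \<open>j < n\<close> zi by simp
    next
      case False thus ?thesis using b \<open>j < n\<close> p[OF \<open>j < n\<close>] by auto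
    qed
  next
    case False
    hence "p j = j" "s j = 1" using pid sid by auto
    thus ?thesis using b False by auto
  qed
qed

lemma t1_rmult:
  assumes "odd n" "2 \<le> n" "n < d" "x \<in> carrier_vec d" "j < d"
  shows "rmult x (blockdiag_id d n (z1 n) :: 'a::field mat) $ j = x $ p1 n j"
proof -
  have "rmult x (blockdiag_id d n (z1 n) :: 'a mat) $ j = 1 * x $ p1 n j"
  proof (rule rmult_single_col[of _ d])
    show "(blockdiag_id d n (z1 n) :: 'a mat) \<in> carrier_mat d d"
      using blockdiag_carrier[OF z1_carrier, of n d] assms by auto
    show "p1 n j < d" using assms by (auto simp: p1_def)
    fix i assume i: "i < d"
    show "(blockdiag_id d n (z1 n) :: 'a mat) $$ (i,j) = (if i = p1 n j then 1 else 0)"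
    proof (rule bd_entry[OF z1_carrier assms(3) i assms(5), where s = "\<lambda>_. 1"])
      show "\<And>j. j < n \<Longrightarrow> p1 n j < n" by (auto simp: p1_def)
      show "\<And>j. n \<le> j \<Longrightarrow> p1 n j = j" by (simp add: p1_def)
      show "\<And>i j. i < n \<Longrightarrow> j < n \<Longrightarrow> (z1 n :: 'a mat) $$ (i, j) = (if i = p1 n j then 1 else 0)"
        using z1_index[OF assms(1)] by blast
    qed simp
  qed (use assms in auto)
  thus ?thesis by simp
qed

lemma t2_rmult:
  assumes "odd n" "2 \<le> n" "n < d" "x \<in> carrier_vec d" "j < d"
  shows "rmult x (blockdiag_id d n (z2 n) :: 'a::field mat) $ j = (if j = n - 1 then -1 else 1) * x $ p2 n j"
proof (rule rmult_single_col[of _ d])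
  show "(blockdiag_id d n (z2 n) :: 'a mat) \<in> carrier_mat d d"
    using blockdiag_carrier[OF z2_carrier, of n d] assms by auto
  show "p2 n j < d" using assms by (auto simp: p2_def)
  fix i assume i: "i < d"
  show "(blockdiag_id d n (z2 n) :: 'a mat) $$ (i,j) = (if i = p2 n j then (if j = n - 1 then -1 else 1) else 0)"
  proof (rule bd_entry[OF z2_carrier assms(3) i assms(5), where s = "\<lambda>j. if j = n - 1 then -1 else 1"])
    show "\<And>j. j < n \<Longrightarrow> p2 n j < n" using assms by (auto simp: p2_def)
    show "\<And>j. n \<le> j \<Longrightarrow> p2 n j = j" using assms by (auto simp: p2_def)
    show "\<And>j. n \<le> j \<Longrightarrow> (if j = n - 1 then -1 else 1) = (1::'a)" using assms by auto
    show "\<And>i j. i < n \<Longrightarrow> j < n \<Longrightarrow> (z2 n :: 'a mat) $$ (i, j) = (if i = p2 n j then (if j = n - 1 then -1 else 1) else 0)"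
      using z2_index[OF assms(1,2)] by blast
  qed
qed (use assms in auto)

lemma t0_rmult:
  assumes "2 < d" "x \<in> carrier_vec d" "j < d"
  shows "rmult x (Eij d 0 1 1 :: 'a::field mat) $ j = (if j = 1 then x $ 0 + x $ 1 else x $ j)"
proof -
  have c: "(Eij d 0 1 1 :: 'a mat) \<in> carrier_mat d d" unfolding Eij_def by auto
  have "rmult x (Eij d 0 1 1 :: 'a mat) $ j = (\<Sum>i<d. Eij d 0 1 1 $$ (i,j) * x $ i)"
    using assms c by (simp add: rmult_index)
  also have "\<dots> = (\<Sum>i<d. (if i = 0 then (if j = 1 then 1 else 0) else 0) * x $ i
                       + (if i = j then 1 else 0) * x $ i)"
    by (rule sum.cong, insert assms, auto simp: Eij_def)
  also have "\<dots> = (if j = 1 then 1 else 0) * x $ 0 + 1 * x $ j"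
    unfolding sum.distrib using sum_single[of 0 d 1 x] sum_single[of j d 1 x] sum_single[of 1 d 1 x] assms by simp
  finally show ?thesis by simp
qed

lemma two_ne_zero_char:
  assumes "CHAR('a::field) \<noteq> 2" shows "(2::'a) \<noteq> 0"
proof
  assume "(2::'a) = 0"
  hence "of_nat 2 = (0::'a)" by simp
  hence "CHAR('a) dvd 2" by (simp only: of_nat_eq_0_iff_char_dvd)
  hence "CHAR('a) \<noteq> 0" by (metis dvd_0_left_iff zero_neq_numeral)
  hence "CHAR('a) \<le> 2" "CHAR('a) \<noteq> 0" using dvd_imp_le \<open>CHAR('a) dvd 2\<close> by auto
  hence "CHAR('a) = 1 \<or> CHAR('a) = 2" by linarith
  moreover have "CHAR('a) \<noteq> 1"
  proof
    assume "CHAR('a) = 1"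
    hence "of_nat 1 = (0::'a)" by (simp only: of_nat_eq_0_iff_char_dvd) simp
    thus False by simp
  qed
  ultimately show False using assms by simp
qed


lemma g0: assumes "2 \<le> n" shows "av d n (unit_vec d 0) = (0\<^sub>v d :: 'a::field vec)"
  by (rule eq_vecI, insert assms, auto simp: av_def)

lemma case_z1:
  assumes odd: "odd n" and n2: "2 \<le> n" and nd: "n < d"
  shows "weak_doubling d n (Pm d n * (blockdiag_id d n (z1 n) :: 'a::field mat) * Em d n)"
proof -
  let ?t = "blockdiag_id d n (z1 n) :: 'a mat"
  have tc: "?t \<in> carrier_mat d d" using blockdiag_carrier[OF z1_carrier, of n d] nd by auto
  have F: "\<And>x j. x \<in> carrier_vec d \<Longrightarrow> j < d \<Longrightarrow> rmult x ?t $ j = x $ p1 n j"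
    using t1_rmult[OF odd n2 nd] by blast
  interpret setting d n ?t
  proof (unfold_locales)
    show "2 \<le> n" "n < d" "?t \<in> carrier_mat d d" by fact+
    fix x :: "'a vec"
    show "x \<in> Zs d n \<Longrightarrow> rmult x ?t \<in> Zs d n"
      using tc F unfolding Zs_def by (auto simp: p1_def)
    assume x: "x \<in> carrier_vec d" "\<forall>j<n. x $ j = 0"
    show "rmult x ?t = x"
    proof (rule eq_vecI)
      fix j assume "j < dim_vec x"
      hence j: "j < d" using x by simp
      show "rmult x ?t $ j = x $ j"
      proof (cases "j < n")
        case True
        have "p1 n j < n" using True by (auto simp: p1_def)
        thus ?thesis using F[OF x(1) j] x(2) True by simp
      next
        case False thus ?thesis using F[OF x(1) j] by (simp add: p1_def)
      qed
    qed (use x tc in auto)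
  qed
  have tu: "rmult (unit_vec d i) ?t = unit_vec d (i - 1)" if i: "1 \<le> i" "i < n" for i
  proof (rule eq_vecI)
    fix j assume "j < dim_vec (unit_vec d (i - 1) :: 'a vec)"
    hence j: "j < d" by simp
    have pj: "p1 n j < d" using j nd by (auto simp: p1_def)
    have iff: "(p1 n j = i) = (j = i - 1)" using i by (auto simp: p1_def)
    show "rmult (unit_vec d i) ?t $ j = unit_vec d (i - 1) $ j"
      using F[OF _ j, of "unit_vec d i"] pj j iff i nd by auto
  qed (use tc in auto)
  have D: "av d n (unit_vec d (i - 1)) - av d n (unit_vec d i) \<in> S" if i: "2 \<le> i" "i < n" for i
  proof -
    have "av d n (unit_vec d (i - 1) - unit_vec d i) \<in> S" using K3u[OF _ tu[of i]] i by auto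
    moreover have "av d n (unit_vec d (i - 1) - unit_vec d i) = av d n (unit_vec d (i - 1)) - av d n (unit_vec d i)"
      by (rule av_minus, auto)
    ultimately show ?thesis by metis
  qed
  have one: "av d n (unit_vec d 1) \<in> S"
  proof -
    have m: "av d n (unit_vec d 0 - unit_vec d 1) \<in> S" using K3u[of 1 "unit_vec d 0"] tu[of 1] n2 by auto
    have eq: "av d n (unit_vec d 0 - unit_vec d 1) = 0\<^sub>v d - av d n (unit_vec d 1)"
      by (rule eq_vecI, insert n2, auto simp: av_def)
    have a: "0\<^sub>v d - av d n (unit_vec d 1) \<in> S" using m eq by metis
    have "av d n (unit_vec d 1) = (-1) \<cdot>\<^sub>v (0\<^sub>v d - av d n (unit_vec d 1))" by (rule eq_vecI, auto)
    thus ?thesis using S_smult[OF a] by metis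
  qed
  have "weak_doubling d n Tm" by (rule main_wd, rule G_from_chain[OF D one])
  thus ?thesis unfolding Tm_def .
qed

lemma case_z2:
  assumes odd: "odd n" and n2: "2 \<le> n" and nd: "n < d" and two: "(2::'a::field) \<noteq> 0"
  shows "weak_doubling d n (Pm d n * (blockdiag_id d n (z2 n) :: 'a::field mat) * Em d n)"
proof -
  let ?t = "blockdiag_id d n (z2 n) :: 'a mat"
  have n3: "3 \<le> n" using odd n2 by presburger
  have tc: "?t \<in> carrier_mat d d" using blockdiag_carrier[OF z2_carrier, of n d] nd by auto
  have F: "\<And>x j. x \<in> carrier_vec d \<Longrightarrow> j < d \<Longrightarrow> rmult x ?t $ j = (if j = n - 1 then -1 else 1) * x $ p2 n j"
    using t2_rmult[OF odd n2 nd] by blast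
  interpret setting d n ?t
  proof (unfold_locales)
    show "2 \<le> n" "n < d" "?t \<in> carrier_mat d d" by fact+
    fix x :: "'a vec"
    show "x \<in> Zs d n \<Longrightarrow> rmult x ?t \<in> Zs d n"
      using tc F n3 unfolding Zs_def by (auto simp: p2_def)
    assume x: "x \<in> carrier_vec d" "\<forall>j<n. x $ j = 0"
    show "rmult x ?t = x"
    proof (rule eq_vecI)
      fix j assume "j < dim_vec x"
      hence j: "j < d" using x by simp
      show "rmult x ?t $ j = x $ j"
      proof (cases "j < n")
        case True
        have "p2 n j < n" using True n3 by (auto simp: p2_def)
        thus ?thesis using F[OF x(1) j] x(2) True by simp
      next
        case False
        hence "p2 n j = j" "j \<noteq> n - 1" using n3 by (auto simp: p2_def)
        thus ?thesis using F[OF x(1) j] by simp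
      qed
    qed (use x tc in auto)
  qed
  have tu: "rmult (unit_vec d i) ?t = unit_vec d (i - 1)" if i: "2 \<le> i" "i < n" for i
  proof (rule eq_vecI)
    fix j assume "j < dim_vec (unit_vec d (i - 1) :: 'a vec)"
    hence j: "j < d" by simp
    have pj: "p2 n j < d" using j nd by (auto simp: p2_def)
    have iff: "(p2 n j = i) = (j = i - 1)" using i n3 by (auto simp: p2_def)
    have ne: "p2 n j = i \<Longrightarrow> j \<noteq> n - 1" using iff i by auto
    show "rmult (unit_vec d i) ?t $ j = unit_vec d (i - 1) $ j"
      using F[OF _ j, of "unit_vec d i"] pj j iff i nd ne by auto
  qed (use tc in auto)
  have tu1: "rmult (unit_vec d 1) ?t = (-1) \<cdot>\<^sub>v unit_vec d (n - 1)"
  proof (rule eq_vecI)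
    fix j assume "j < dim_vec ((-1) \<cdot>\<^sub>v unit_vec d (n - 1) :: 'a vec)"
    hence j: "j < d" by simp
    have pj: "p2 n j < d" using j nd by (auto simp: p2_def)
    have iff: "(p2 n j = 1) = (j = n - 1)" using n3 by (auto simp: p2_def)
    show "rmult (unit_vec d 1) ?t $ j = ((-1) \<cdot>\<^sub>v unit_vec d (n - 1)) $ j"
      using F[OF _ j, of "unit_vec d 1"] pj j iff nd n3 by auto
  qed (use tc in auto)
  have D: "av d n (unit_vec d (i - 1)) - av d n (unit_vec d i) \<in> S" if i: "2 \<le> i" "i < n" for i
  proof -
    have "av d n (unit_vec d (i - 1) - unit_vec d i) \<in> S" using K3u[OF _ tu[of i]] i by auto
    moreover have "av d n (unit_vec d (i - 1) - unit_vec d i) = av d n (unit_vec d (i - 1)) - av d n (unit_vec d i)"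
      by (rule av_minus, auto)
    ultimately show ?thesis by metis
  qed
  let ?g1 = "av d n (unit_vec d 1) :: 'a vec" and ?gl = "av d n (unit_vec d (n - 1)) :: 'a vec"
  have a: "?g1 - ?gl \<in> S" using chain[OF D] n3 by auto
  have b0: "av d n ((-1) \<cdot>\<^sub>v unit_vec d (n - 1) - unit_vec d 1) \<in> S" using K3u[OF _ tu1] n2 by auto
  have "av d n ((-1) \<cdot>\<^sub>v unit_vec d (n - 1) - unit_vec d 1) = (-1) \<cdot>\<^sub>v ?gl - ?g1"
    by (rule eq_vecI, auto simp: av_def)
  hence b: "(-1) \<cdot>\<^sub>v ?gl - ?g1 \<in> S" using b0 by metis
  have "?g1 = (1/2) \<cdot>\<^sub>v ((?g1 - ?gl) - ((-1) \<cdot>\<^sub>v ?gl - ?g1))"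
    using two by (intro eq_vecI, auto simp: field_simps)
  hence one: "?g1 \<in> S" using S_smult[OF S_minus[OF a b]] by metis
  have "weak_doubling d n Tm" by (rule main_wd, rule G_from_chain[OF D one])
  thus ?thesis unfolding Tm_def .
qed

lemma case_n2:
  assumes nd: "2 < d"
  shows "weak_doubling d 2 (Pm d 2 * (Eij d 0 1 1 :: 'a::field mat) * Em d 2)"
proof -
  let ?t = "Eij d 0 1 1 :: 'a mat"
  have tc: "?t \<in> carrier_mat d d" unfolding Eij_def by auto
  have F: "\<And>x j. x \<in> carrier_vec d \<Longrightarrow> j < d \<Longrightarrow> rmult x ?t $ j = (if j = 1 then x $ 0 + x $ 1 else x $ j)"
    using t0_rmult[OF nd] by blast
  interpret setting d 2 ?t
  proof (unfold_locales)
    show "2 \<le> (2::nat)" "2 < d" "?t \<in> carrier_mat d d" using nd tc by auto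
    fix x :: "'a vec"
    show "x \<in> Zs d 2 \<Longrightarrow> rmult x ?t \<in> Zs d 2"
      using tc F unfolding Zs_def by auto
    assume x: "x \<in> carrier_vec d" "\<forall>j<2. x $ j = 0"
    show "rmult x ?t = x"
      by (rule eq_vecI, insert x tc F, auto)
  qed
  have tu: "rmult (unit_vec d 0) ?t = unit_vec d 0 + unit_vec d 1"
    by (rule eq_vecI, insert F[of "unit_vec d 0"] nd tc, auto)
  have e: "unit_vec d 0 + unit_vec d 1 - unit_vec d 0 = (unit_vec d 1 :: 'a vec)"
    by (rule eq_vecI, auto)
  have one: "av d 2 (unit_vec d 1) \<in> S" using K3u[of 0, OF _ tu] e by simp
  have "weak_doubling d 2 Tm"
  proof (rule main_wd)
    fix i :: nat assume "1 \<le> i" "i < 2"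
    hence "i = 1" by simp
    thus "av d 2 (unit_vec d i) \<in> S" using one by simp
  qed
  thus ?thesis unfolding Tm_def .
qed


theorem lemma7p7:
  fixes d n :: nat
  assumes "2 \<le> n" and "n < d" and "n = 2 \<or> odd n"
  shows "\<exists>E :: 'a::{field,finite} mat. E \<in> carrier_mat d d \<and> det E = 1 \<and>
           weak_doubling d n (the (mat_inverse E) * t_elem d n * E)"
proof -
  have wd: "weak_doubling d n (Pm d n * (t_elem d n :: 'a mat) * Em d n)"
  proof (cases "n = 2")
    case True
    hence "(t_elem d n :: 'a mat) = Eij d 0 1 1" by (simp add: t_elem_def)
    thus ?thesis using case_n2[of d] True assms by simp
  next
    case False
    hence odd: "odd n" using assms by auto
    show ?thesis
    proof (cases "CHAR('a) = 2")
      case True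
      hence "(t_elem d n :: 'a mat) = blockdiag_id d n (z1 n)" using False by (simp add: t_elem_def)
      thus ?thesis using case_z1[OF odd assms(1,2)] by simp
    next
      case c2: False
      hence "(t_elem d n :: 'a mat) = blockdiag_id d n (z2 n)" using False by (simp add: t_elem_def)
      thus ?thesis using case_z2[OF odd assms(1,2) two_ne_zero_char[OF c2]] by simp
    qed
  qed
  have "the (mat_inverse (Em d n :: 'a mat)) = Pm d n" using inv_Em[of n d] assms by simp
  moreover have "det (Em d n :: 'a mat) = 1" by (rule det_Em[OF assms(1)])
  ultimately show ?thesis using wd by (intro exI[of _ "Em d n"], auto)
qed

end
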